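(* For $n \ge 8$, let $\mu'(n)$ be the minimum number of edges of a (not necessarily connected) non-prime graph of order $n$. Then $\mu'(n) \le n$.
   Context: Graphs are finite and simple. A prime labeling of a graph $G$ of order $n$ is a bijection $\alpha: V(G) \to \{1,2,\dots,n\}$ such that $\gcd(\alpha(u),\alpha(v)) = 1$ for every edge $uv \in E(G)$. $G$ is prime if it admits a prime labeling, and non-prime otherwise. *)

theory Defs
  imports Main
begin

text \<open>A finite simple graph: finite vertex set V, edges are 2-element subsets of V.
  Vertices are taken from nat (every finite graph is isomorphic to one of these).\<close>
definition simple_graph :: "nat set \<Rightarrow> nat set set \<Rightarrow> bool" where
  "simple_graph V E \<longleftrightarrow> finite V \<and> (\<forall>e\<in>E. e \<subseteq> V \<and> card e = 2)"

definition prime_labeling :: "nat set \<Rightarrow> nat set set \<Rightarrow> (nat \<Rightarrow> nat) \<Rightarrow> bool" where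
  "prime_labeling V E \<alpha> \<longleftrightarrow> bij_betw \<alpha> V {1..card V} \<and>
     (\<forall>u v. {u, v} \<in> E \<longrightarrow> coprime (\<alpha> u) (\<alpha> v))"

definition prime_graph :: "nat set \<Rightarrow> nat set set \<Rightarrow> bool" where
  "prime_graph V E \<longleftrightarrow> (\<exists>\<alpha>. prime_labeling V E \<alpha>)"

definition mu' :: "nat \<Rightarrow> nat" where
  "mu' n = (LEAST m. \<exists>V E. simple_graph V E \<and> card V = n \<and> \<not> prime_graph V E \<and> card E = m)"

end

theory Submission
  imports Defs
begin

definition pf :: "nat \<Rightarrow> nat" where
  "pf v = (if v mod 3 = 2 then v - 2 else v + 1)"

definition GE :: "nat \<Rightarrow> nat set set" where
  "GE n = (\<lambda>v. {v, pf v}) ` {v. v < n \<and> pf v < n}"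

lemma pf_ne: "pf v \<noteq> v"
  unfolding pf_def by auto

lemma card_pf: "card {v, pf v} = 2"
  using pf_ne[of v] by simp

lemma GE_simple: "simple_graph {0..<n} (GE n)"
  unfolding simple_graph_def GE_def using card_pf by auto

lemma GE_card: "card (GE n) \<le> n"
proof -
  have "card (GE n) \<le> card {v. v < n \<and> pf v < n}"
    unfolding GE_def by (rule card_image_le) simp
  also have "\<dots> \<le> card {0..<n}" by (rule card_mono) auto
  finally show ?thesis by simp
qed

lemma GE_adj:
  assumes "u < n" "v < n" "u \<noteq> v" "u div 3 = v div 3"
  shows "{u, v} \<in> GE n"
proof -
  { fix a b assume ab: "a < b" "a < n" "b < n" "a div 3 = b div 3"
    have "{a, b} \<in> GE n"
    proof (cases "b = a + 1 \<and> a mod 3 \<noteq> 2")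
      case True
      then have "pf a = b" unfolding pf_def by auto
      then show ?thesis unfolding GE_def using ab by force
    next
      case False
      then have "b = a + 2 \<and> b mod 3 = 2" using ab
        div_mult_mod_eq[of a 3] div_mult_mod_eq[of b 3] mod_less_divisor[of 3 a] mod_less_divisor[of 3 b]
        by linarith
      then have "pf b = a" unfolding pf_def by auto
      then have "{b, pf b} = {a, b}" by auto
      then show ?thesis unfolding GE_def using ab \<open>pf b = a\<close>
        by (metis (mono_tags, lifting) image_eqI mem_Collect_eq)
    qed }
  then show ?thesis using assms
    by (metis insert_commute linorder_neq_iff)
qed

lemma evens_card: "card {x \<in> {1..n}. even x} = n div 2"
proof -
  have "{x \<in> {1..(n::nat)}. even x} = (\<lambda>k. 2*k) ` {1..n div 2}"
  proof (rule set_eqI, rule iffI)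
    fix x assume "x \<in> {x \<in> {1..n}. even x}"
    then obtain k where "x = 2*k" "1 \<le> k" "k \<le> n div 2" by auto
    then show "x \<in> (\<lambda>k. 2*k) ` {1..n div 2}" by auto
  next
    fix x assume "x \<in> (\<lambda>k. 2*k) ` {1..n div 2}"
    then show "x \<in> {x \<in> {1..n}. even x}" by auto
  qed
  moreover have "card ((\<lambda>k. 2*k) ` {1..n div 2}) = n div 2"
    by (subst card_image) (auto simp: inj_on_def)
  ultimately show ?thesis by simp
qed

lemma GE_nonprime:
  assumes "n \<ge> 8"
  shows "\<not> prime_graph {0..<n} (GE n)"
proof
  assume "prime_graph {0..<n} (GE n)"
  then obtain \<alpha> where bij: "bij_betw \<alpha> {0..<n} {1..n}"
    and cop: "\<And>u v. {u, v} \<in> GE n \<Longrightarrow> coprime (\<alpha> u) (\<alpha> v)"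
    unfolding prime_graph_def prime_labeling_def by auto
  define S where "S = {v \<in> {0..<n}. even (\<alpha> v)}"
  have "\<alpha> ` S = {x \<in> {1..n}. even x}"
  proof
    show "\<alpha> ` S \<subseteq> {x \<in> {1..n}. even x}" using bij unfolding S_def bij_betw_def by auto
    show "{x \<in> {1..n}. even x} \<subseteq> \<alpha> ` S"
    proof
      fix x assume x: "x \<in> {x \<in> {1..n}. even x}"
      then have "x \<in> \<alpha> ` {0..<n}" using bij unfolding bij_betw_def by simp
      then obtain v where "v \<in> {0..<n}" "\<alpha> v = x" by blast
      then show "x \<in> \<alpha> ` S" using x unfolding S_def by auto
    qed
  qed
  moreover have "inj_on \<alpha> S" using bij unfolding S_def bij_betw_def
    by (auto intro: inj_on_subset)
  ultimately have cS: "card S = n div 2"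
    using evens_card card_image by metis
  have inj: "inj_on (\<lambda>v. v div 3) S"
  proof (rule inj_onI, rule ccontr)
    fix u v assume "u \<in> S" "v \<in> S" "u div 3 = v div 3" "u \<noteq> v"
    then have "{u, v} \<in> GE n" using GE_adj unfolding S_def by auto
    then have "coprime (\<alpha> u) (\<alpha> v)" by (rule cop)
    moreover have "even (\<alpha> u)" "even (\<alpha> v)" using \<open>u \<in> S\<close> \<open>v \<in> S\<close> S_def by auto
    ultimately show False by auto
  qed
  have "(\<lambda>v. v div 3) ` S \<subseteq> {0..<(n+2) div 3}" unfolding S_def by auto
  then have "card ((\<lambda>v. v div 3) ` S) \<le> (n+2) div 3"
    by (metis card_atLeastLessThan card_mono finite_atLeastLessThan minus_nat.diff_0)
  then have "n div 2 \<le> (n+2) div 3" using inj cS card_image by metis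
  then show False using assms
    div_mult_mod_eq[of n 2] div_mult_mod_eq[of "n+2" 3] mod_less_divisor[of 2 n] mod_less_divisor[of 3 "n+2"]
    by linarith
qed

theorem theorem10p5:
  fixes n :: nat
  assumes "n \<ge> 8"
  shows "mu' n \<le> n"
proof -
  have "\<exists>V E. simple_graph V E \<and> card V = n \<and> \<not> prime_graph V E \<and> card E = card (GE n)"
    using GE_simple GE_nonprime[OF assms] by fastforce
  then have "mu' n \<le> card (GE n)" unfolding mu'_def by (rule Least_le)
  then show ?thesis using GE_card le_trans by blast
qed

end
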